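(* Let $\Sigma$ be a finite nonempty set of $d\times d$ real matrices with nonnegative entries. There exists a constant $K>0$ such that the following holds. For each $i\in\{1,\dots,d\}$ let $m_i$ be any positive integer with $\|\Sigma^{m_i}\|_{i,i}\ne 0$, or $m_i=1$ if no such positive integer exists. Then \[ \max_{i}\sqrt[m_i]{\|\Sigma^{m_i}\|_{i,i}}\;\le\;\rho(\Sigma)\;\le\;\max_i\sqrt[m_i]{K\,\|\Sigma^{m_i}\|_{i,i}}. \]
   Context: For $n\ge1$, $\|\Sigma^n\|_{i,j}=\max_{A_1,\dots,A_n\in\Sigma}(A_1\cdots A_n)_{i,j}$. The joint spectral radius is $\rho(\Sigma)=\lim_{n\to\infty}\sqrt[n]{\max_{A_1,\dots,A_n\in\Sigma}\|A_1\cdots A_n\|}$ for any matrix norm (the limit exists and is independent of the norm). The constant $K$ depends only on $\Sigma$, not on the choice of the $m_i$. *)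

theory Defs
  imports "HOL-Analysis.Analysis"
begin

text \<open>Products A_1 ** ... ** A_n of length n with all factors in S (n = 0 gives the identity).\<close>
definition prods :: "(real^'n^'n) set \<Rightarrow> nat \<Rightarrow> (real^'n^'n) set" where
  "prods S n = {foldr (**) As (mat 1) | As. length As = n \<and> set As \<subseteq> S}"

text \<open>Entrywise maximum over products of length n: the (i,j) entry of the "norm" of S^n.\<close>
definition pnorm :: "(real^'n^'n) set \<Rightarrow> nat \<Rightarrow> 'n \<Rightarrow> 'n \<Rightarrow> real" where
  "pnorm S n i j = Max ((\<lambda>P. P $ i $ j) ` prods S n)"

text \<open>Joint spectral radius, as the limit of n-th roots of the maximal norm of length-n
  products (using the Frobenius norm of real^'n^'n; the limit is norm-independent).\<close>
definition jsr :: "(real^'n^'n) set \<Rightarrow> real" where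
  "jsr S = lim (\<lambda>n. root n (Max (norm ` prods S n)))"

end

theory Submission
  imports Defs
begin


lemma foldr_mult_append:
  "foldr (**) (As @ Bs) (mat 1) = foldr (**) As (mat 1) ** foldr (**) Bs (mat 1)"
  for As Bs :: "(real^'n^'n) list"
  by (induction As) (auto simp: matrix_mul_lid matrix_mul_assoc)

lemma fek_pow: fixes f :: "nat \<Rightarrow> real"
  assumes nn: "\<forall>n. f n \<ge> 0" and sm: "\<forall>a b. f (a+b) \<le> f a * f b"
  shows "f (q*k + r) \<le> f k ^ q * f r"
proof (induction q)
  case 0 then show ?case by simp
next
  case (Suc q)
  have "f (Suc q * k + r) = f (k + (q*k + r))" by (simp add: algebra_simps)
  also have "\<dots> \<le> f k * f (q*k+r)" using sm by blast
  also have "\<dots> \<le> f k * (f k ^ q * f r)" using Suc nn by (intro mult_left_mono) auto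
  finally show ?case by (simp add: algebra_simps)
qed

lemma fek_bound: fixes f :: "nat \<Rightarrow> real"
  assumes nn: "\<forall>n. f n \<ge> 0" and sm: "\<forall>a b. f (a+b) \<le> f a * f b"
    and k: "k > 0" "f k \<le> y^k" and y: "y > 0"
  shows "\<exists>C>0. \<forall>n. f n \<le> C * y^n"
proof -
  define C0 where "C0 = Max (f ` {..<k})"
  define C where "C = (C0+1) * (max 1 (1/y))^k"
  have C0: "f r \<le> C0" if "r < k" for r unfolding C0_def using that by (intro Max_ge) auto
  have C0nn: "C0 \<ge> 0" using C0[OF k(1)] nn by (meson order_trans)
  have "C > 0" unfolding C_def using C0nn by (intro mult_pos_pos zero_less_power) auto
  moreover have "f n \<le> C * y^n" for n
  proof -
    define q r where "q = n div k" and "r = n mod k"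
    have n: "n = q*k + r" unfolding q_def r_def by simp
    have r: "r < k" unfolding r_def using k by simp
    have "f n \<le> f k ^ q * f r" unfolding n by (rule fek_pow[OF nn sm])
    also have "\<dots> \<le> (y^k)^q * C0"
      using k nn C0[OF r] y by (intro mult_mono power_mono) auto
    also have "(y^k)^q = y^n * (1/y)^r" using y unfolding n
      by (simp add: power_add power_mult power_divide mult.commute)
    also have "(1/y)^r \<le> (max 1 (1/y))^k"
    proof -
      have "(1/y)^r \<le> (max 1 (1/y))^r" using y by (intro power_mono) auto
      also have "\<dots> \<le> (max 1 (1/y))^k" using r by (intro power_increasing) auto
      finally show ?thesis .
    qed
    then have "y^n * (1/y)^r * C0 \<le> y^n * (max 1 (1/y))^k * (C0+1)"
      using y C0nn by (intro mult_mono) auto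
    finally show ?thesis unfolding C_def by (simp add: algebra_simps)
  qed
  ultimately show ?thesis by blast
qed

lemma fekete: fixes f :: "nat \<Rightarrow> real"
  assumes nn: "\<forall>n. f n \<ge> 0" and sm: "\<forall>a b. f (a+b) \<le> f a * f b"
  defines "L \<equiv> Inf {root n (f n) | n. n > 0}"
  shows fekete_ge: "\<And>n. n > 0 \<Longrightarrow> L \<le> root n (f n)"
    and fekete_nn: "L \<ge> 0"
    and fekete_bound: "\<And>y. y > L \<Longrightarrow> \<exists>C>0. \<forall>n. f n \<le> C * y^n"
    and fekete_lim: "(\<lambda>n. root n (f n)) \<longlonglongrightarrow> L"
proof -
  have bdd: "bdd_below {root n (f n) | n. n > 0}"
    using nn by (intro bdd_belowI[of _ 0]) auto
  have ne: "{root n (f n) | n. n > 0} \<noteq> {}" by auto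
  show ge: "\<And>n. n > 0 \<Longrightarrow> L \<le> root n (f n)"
    unfolding L_def using bdd by (intro cInf_lower) auto
  show L0: "L \<ge> 0" unfolding L_def using ne nn by (intro cInf_greatest) auto
  show bnd: "\<And>y. y > L \<Longrightarrow> \<exists>C>0. \<forall>n. f n \<le> C * y^n"
  proof -
    fix y assume y: "y > L"
    obtain x where x: "x \<in> {root n (f n) | n. n > 0}" "x < y"
      using cInf_lessD[OF ne, of y] y unfolding L_def by auto
    then obtain k where k: "k > 0" "root k (f k) < y" by auto
    have "f k = (root k (f k))^k" using k nn by (simp add: real_root_pow_pos2)
    also have "\<dots> \<le> y^k" using k nn by (intro power_mono) auto
    finally show "\<exists>C>0. \<forall>n. f n \<le> C * y^n"
      using fek_bound[OF nn sm k(1)] y L0 by auto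
  qed
  show "(\<lambda>n. root n (f n)) \<longlonglongrightarrow> L"
  proof (rule order_tendstoI)
    fix a assume "a < L"
    have "\<forall>\<^sub>F n in sequentially. n \<ge> 1" by (rule eventually_ge_at_top)
    then show "\<forall>\<^sub>F n in sequentially. a < root n (f n)"
      by eventually_elim (use ge \<open>a < L\<close> in \<open>auto intro: less_le_trans\<close>)
  next
    fix a assume a: "L < a"
    define y where "y = (L + a) / 2"
    have y: "L < y" "y < a" using a unfolding y_def by auto
    obtain C where C: "C > 0" "\<forall>n. f n \<le> C * y^n" using bnd[OF y(1)] by blast
    have "(\<lambda>n. root n C * y) \<longlonglongrightarrow> 1 * y"
      by (intro tendsto_mult_right LIMSEQ_root_const C)
    then have ev: "\<forall>\<^sub>F n in sequentially. root n C * y < a" using y by (intro order_tendstoD(2)) auto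
    show "\<forall>\<^sub>F n in sequentially. root n (f n) < a"
      using ev eventually_ge_at_top[of 1]
    proof eventually_elim
      case (elim n)
      have "root n (f n) \<le> root n (C * y^n)" using C elim by (intro real_root_le_mono) auto
      also have "\<dots> = root n C * y" using elim y L0 by (simp add: real_root_mult real_root_power_cancel)
      finally show ?case using elim by simp
    qed
  qed
qed

definition MM :: "(real^'n^'n) set \<Rightarrow> nat \<Rightarrow> real" where
  "MM S n = Max ((\<lambda>p. pnorm S n (fst p) (snd p)) ` UNIV)"

definition ff :: "(real^'n^'n) set \<Rightarrow> nat \<Rightarrow> real" where
  "ff S n = real CARD('n) * MM S n"

definition rho :: "(real^'n^'n) set \<Rightarrow> real" where
  "rho S = Inf {root n (ff S n) | n. n > 0}"

definition rhoi :: "(real^'n^'n) set \<Rightarrow> 'n \<Rightarrow> real" where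
  "rhoi S i = Sup {root n (pnorm S n i i) | n. n > 0}"

locale nns =
  fixes S :: "(real^'n::finite^'n) set"
  assumes finS: "finite S" and neS: "S \<noteq> {}" and nnS: "\<forall>A\<in>S. \<forall>i j. A $ i $ j \<ge> 0"
begin

lemma prods_finite: "finite (prods S n)"
proof -
  have "prods S n = (\<lambda>As. foldr (**) As (mat 1)) ` {As. set As \<subseteq> S \<and> length As = n}"
    unfolding prods_def by auto
  then show ?thesis using finite_lists_length_eq[OF finS] by simp
qed

lemma prods_nonempty: "prods S n \<noteq> {}"
proof -
  obtain A where "A \<in> S" using neS by auto
  then have "foldr (**) (replicate n A) (mat 1) \<in> prods S n" unfolding prods_def
    by (intro CollectI exI[of _ "replicate n A"]) (auto simp del: foldr_replicate)
  then show ?thesis by auto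
qed

lemma prods_0: "prods S 0 = {mat 1}"
  unfolding prods_def by auto

lemma prods_mult: "P \<in> prods S a \<Longrightarrow> Q \<in> prods S b \<Longrightarrow> P ** Q \<in> prods S (a+b)"
  unfolding prods_def
proof clarify
  fix As Bs :: "(real^'n^'n) list"
  assume "set As \<subseteq> S" "set Bs \<subseteq> S" "a = length As" "b = length Bs"
  then show "\<exists>Cs. foldr (**) As (mat 1) ** foldr (**) Bs (mat 1) = foldr (**) Cs (mat 1) \<and>
              length Cs = length As + length Bs \<and> set Cs \<subseteq> S"
    by (intro exI[of _ "As @ Bs"]) (auto simp: foldr_mult_append simp del: foldr_append)
qed

lemma prods_split: "X \<in> prods S (a+b) \<Longrightarrow> \<exists>P\<in>prods S a. \<exists>Q\<in>prods S b. X = P ** Q"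
proof -
  assume "X \<in> prods S (a+b)"
  then obtain Cs where Cs: "X = foldr (**) Cs (mat 1)" "length Cs = a + b" "set Cs \<subseteq> S"
    unfolding prods_def by auto
  have "take a Cs @ drop a Cs = Cs" by simp
  then have "X = foldr (**) (take a Cs) (mat 1) ** foldr (**) (drop a Cs) (mat 1)"
    using Cs(1) foldr_mult_append by metis
  moreover have "foldr (**) (take a Cs) (mat 1) \<in> prods S a"
    unfolding prods_def using Cs set_take_subset[of a Cs] by (intro CollectI exI[of _ "take a Cs"]) auto
  moreover have "foldr (**) (drop a Cs) (mat 1) \<in> prods S b"
    unfolding prods_def using Cs set_drop_subset[of a Cs] by (intro CollectI exI[of _ "drop a Cs"]) auto
  ultimately show ?thesis by blast
qed

lemma mat_mult_nonneg:
  fixes A B :: "real^'n^'n"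
  assumes "\<forall>i j. A$i$j \<ge> 0" "\<forall>i j. B$i$j \<ge> 0"
  shows "\<forall>i j. (A ** B)$i$j \<ge> 0"
  using assms by (auto simp: matrix_matrix_mult_def intro!: sum_nonneg)

lemma prods_nonneg: "P \<in> prods S n \<Longrightarrow> P $ i $ j \<ge> 0"
proof -
  assume "P \<in> prods S n"
  then obtain As where As: "P = foldr (**) As (mat 1)" "set As \<subseteq> S" unfolding prods_def by auto
  have "\<forall>i j. (foldr (**) As (mat 1)) $ i $ j \<ge> (0::real)" using As(2)
  proof (induction As)
    case Nil then show ?case by (auto simp: mat_def)
  next
    case (Cons A As) then show ?case using nnS mat_mult_nonneg[of A "foldr (**) As (mat 1)"] by auto
  qed
  then show ?thesis using As by auto
qed

lemma pnorm_ge: "P \<in> prods S n \<Longrightarrow> P $ i $ j \<le> pnorm S n i j"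
  unfolding pnorm_def using prods_finite by (intro Max_ge) auto

lemma pnorm_attained: "\<exists>P\<in>prods S n. pnorm S n i j = P $ i $ j"
proof -
  have "pnorm S n i j \<in> (\<lambda>P. P $ i $ j) ` prods S n"
    unfolding pnorm_def using prods_finite prods_nonempty by (intro Max_in) auto
  then show ?thesis by auto
qed

lemma pnorm_nonneg: "pnorm S n i j \<ge> 0"
  using pnorm_attained prods_nonneg by metis

lemma pnorm_0: "pnorm S 0 i j = (if i = j then 1 else 0)"
  unfolding pnorm_def prods_0 by (simp add: mat_def)

lemma P1: "pnorm S a j l * pnorm S b l k \<le> pnorm S (a+b) j k"
proof -
  obtain P where P: "P \<in> prods S a" "pnorm S a j l = P$j$l" using pnorm_attained by blast
  obtain Q where Q: "Q \<in> prods S b" "pnorm S b l k = Q$l$k" using pnorm_attained by blast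
  have "P$j$l * Q$l$k \<le> (\<Sum>m\<in>UNIV. P$j$m * Q$m$k)"
    by (rule member_le_sum) (auto intro!: mult_nonneg_nonneg prods_nonneg P Q)
  also have "\<dots> = (P ** Q)$j$k" by (simp add: matrix_matrix_mult_def)
  also have "\<dots> \<le> pnorm S (a+b) j k" by (intro pnorm_ge prods_mult P Q)
  finally show ?thesis using P Q by simp
qed

lemma P2: "pnorm S (a+b) j k \<le> (\<Sum>l\<in>UNIV. pnorm S a j l * pnorm S b l k)"
proof -
  obtain X where X: "X \<in> prods S (a+b)" "pnorm S (a+b) j k = X$j$k" using pnorm_attained by blast
  obtain P Q where PQ: "P \<in> prods S a" "Q \<in> prods S b" "X = P ** Q" using prods_split[OF X(1)] by blast
  have "X$j$k = (\<Sum>l\<in>UNIV. P$j$l * Q$l$k)" by (simp add: PQ matrix_matrix_mult_def)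
  also have "\<dots> \<le> (\<Sum>l\<in>UNIV. pnorm S a j l * pnorm S b l k)"
    by (intro sum_mono mult_mono pnorm_ge PQ pnorm_nonneg prods_nonneg[OF PQ(2)])
  finally show ?thesis using X by simp
qed



lemma pnorm_le_MM: "pnorm S n j k \<le> MM S n"
  unfolding MM_def by (rule Max_ge) (auto intro: image_eqI[of _ _ "(j,k)"])

lemma MM_attained: "\<exists>j k. MM S n = pnorm S n j k"
proof -
  have "MM S n \<in> (\<lambda>p. pnorm S n (fst p) (snd p)) ` UNIV" unfolding MM_def by (rule Max_in) auto
  then show ?thesis by auto
qed

lemma MM_nonneg: "MM S n \<ge> 0" using MM_attained pnorm_nonneg by metis

lemma MM_0: "MM S 0 = 1"
proof -
  obtain j k where "MM S 0 = pnorm S 0 j k" using MM_attained by blast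
  then have "MM S 0 \<le> 1" by (simp add: pnorm_0)
  moreover have "1 \<le> MM S 0" using pnorm_le_MM[of 0 undefined undefined] by (simp add: pnorm_0)
  ultimately show ?thesis by simp
qed

lemma card_pos: "real CARD('n) \<ge> 1" by simp

lemma MM_submult: "MM S (a+b) \<le> real CARD('n) * MM S a * MM S b"
proof -
  obtain j k where jk: "MM S (a+b) = pnorm S (a+b) j k" using MM_attained by blast
  also have "\<dots> \<le> (\<Sum>l\<in>UNIV. pnorm S a j l * pnorm S b l k)" by (rule P2)
  also have "\<dots> \<le> (\<Sum>l\<in>(UNIV::'n set). MM S a * MM S b)"
    by (intro sum_mono mult_mono pnorm_le_MM MM_nonneg pnorm_nonneg)
  also have "\<dots> = real CARD('n) * MM S a * MM S b" by simp
  finally show ?thesis .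
qed

lemma ff_nn: "\<forall>n. ff S n \<ge> 0" unfolding ff_def using MM_nonneg by simp

lemma ff_sm: "\<forall>a b. ff S (a+b) \<le> ff S a * ff S b"
proof (intro allI)
  fix a b
  have "real CARD('n) * MM S (a+b) \<le> real CARD('n) * (real CARD('n) * MM S a * MM S b)"
    by (intro mult_left_mono MM_submult) auto
  then show "ff S (a+b) \<le> ff S a * ff S b" unfolding ff_def by (simp add: algebra_simps)
qed

lemma MM_le_ff: "MM S n \<le> ff S n"
  unfolding ff_def using mult_right_mono[OF card_pos MM_nonneg[of n]] by simp

lemma rho_nn: "rho S \<ge> 0" unfolding rho_def using fekete_nn[OF ff_nn ff_sm] .
lemma rho_le: "n > 0 \<Longrightarrow> rho S \<le> root n (ff S n)" unfolding rho_def using fekete_ge[OF ff_nn ff_sm] .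
lemma rho_bound: "y > rho S \<Longrightarrow> \<exists>C>0. \<forall>n. ff S n \<le> C * y^n"
  unfolding rho_def using fekete_bound[OF ff_nn ff_sm] .
lemma rho_lim: "(\<lambda>n. root n (ff S n)) \<longlonglongrightarrow> rho S"
  unfolding rho_def using fekete_lim[OF ff_nn ff_sm] .

lemma rho_pow_le: "rho S ^ n \<le> ff S n"
proof (cases "n = 0")
  case True then show ?thesis by (simp add: ff_def MM_0)
next
  case False
  then have "rho S ^ n \<le> (root n (ff S n))^n" using rho_le rho_nn by (intro power_mono) auto
  also have "\<dots> = ff S n" using False ff_nn by (simp add: real_root_pow_pos2)
  finally show ?thesis .
qed

lemma norm_bounds: "MM S n \<le> Max (norm ` prods S n)"
   "Max (norm ` prods S n) \<le> real CARD('n) * real CARD('n) * MM S n"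
proof -
  obtain j k where jk: "MM S n = pnorm S n j k" using MM_attained by blast
  obtain P where P: "P \<in> prods S n" "pnorm S n j k = P$j$k" using pnorm_attained by blast
  have "P$j$k \<le> norm (P$j)" using component_le_norm_cart[of "P$j" k] by simp
  also have "\<dots> \<le> norm P" unfolding norm_vec_def[of P] by (rule member_le_L2_set) simp_all
  also have "\<dots> \<le> Max (norm ` prods S n)" using P prods_finite by (intro Max_ge) auto
  finally show "MM S n \<le> Max (norm ` prods S n)" using jk P by simp
  have "Max (norm ` prods S n) \<in> norm ` prods S n" using prods_finite prods_nonempty by (intro Max_in) auto
  then obtain Q where Q: "Q \<in> prods S n" "Max (norm ` prods S n) = norm Q" by auto
  have "norm Q \<le> (\<Sum>i\<in>UNIV. \<bar>norm (Q$i)\<bar>)" unfolding norm_vec_def by (simp add: L2_set_le_sum)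
  also have "\<dots> \<le> (\<Sum>i\<in>(UNIV::'n set). real CARD('n) * MM S n)"
  proof (intro sum_mono)
    fix i
    have "\<bar>norm (Q$i)\<bar> = norm (Q$i)" by simp
    also have "\<dots> \<le> (\<Sum>j\<in>UNIV. \<bar>Q$i$j\<bar>)" by (rule norm_le_l1_cart)
    also have "\<dots> \<le> (\<Sum>j\<in>(UNIV::'n set). MM S n)"
      using Q prods_nonneg pnorm_ge pnorm_le_MM by (intro sum_mono) (auto intro: order_trans[OF pnorm_ge pnorm_le_MM])
    finally show "\<bar>norm (Q$i)\<bar> \<le> real CARD('n) * MM S n" by simp
  qed
  finally show "Max (norm ` prods S n) \<le> real CARD('n) * real CARD('n) * MM S n" using Q by simp
qed

lemma jsr_eq: "jsr S = rho S"
proof -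
  let ?d = "real CARD('n)"
  have l1: "(\<lambda>n. root n (ff S n) / root n ?d) \<longlonglongrightarrow> rho S / 1"
    by (intro tendsto_divide rho_lim LIMSEQ_root_const) auto
  have l2: "(\<lambda>n. root n ?d * root n (ff S n)) \<longlonglongrightarrow> 1 * rho S"
    by (intro tendsto_mult rho_lim LIMSEQ_root_const) auto
  have "(\<lambda>n. root n (Max (norm ` prods S n))) \<longlonglongrightarrow> rho S"
  proof (rule tendsto_sandwich[of "\<lambda>n. root n (ff S n) / root n ?d" _ _ "\<lambda>n. root n ?d * root n (ff S n)"])
    show "\<forall>\<^sub>F n in sequentially. root n (ff S n) / root n ?d \<le> root n (Max (norm ` prods S n))"
      using eventually_ge_at_top[of 1]
    proof eventually_elim
      case (elim n)
      have "root n (ff S n) / root n ?d = root n (MM S n)"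
        using elim by (simp add: ff_def real_root_mult)
      also have "\<dots> \<le> root n (Max (norm ` prods S n))"
        using elim norm_bounds(1) by (intro real_root_le_mono) auto
      finally show ?case .
    qed
    show "\<forall>\<^sub>F n in sequentially. root n (Max (norm ` prods S n)) \<le> root n ?d * root n (ff S n)"
      using eventually_ge_at_top[of 1]
    proof eventually_elim
      case (elim n)
      have "root n (Max (norm ` prods S n)) \<le> root n (?d * ?d * MM S n)"
        using elim norm_bounds(2) by (intro real_root_le_mono) auto
      also have "\<dots> = root n ?d * root n (ff S n)"
        by (simp add: ff_def real_root_mult mult.assoc)
      finally show ?case .
    qed
  qed (use l1 l2 in auto)
  then show ?thesis unfolding jsr_def by (rule limI)
qed



end



definition reach :: "(real^'n^'n) set \<Rightarrow> 'n \<Rightarrow> 'n \<Rightarrow> bool" where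
  "reach S j k = (\<exists>n. pnorm S n j k > 0)"

definition cls :: "(real^'n^'n) set \<Rightarrow> 'n \<Rightarrow> 'n set" where
  "cls S i = {j. reach S i j \<and> reach S j i}"

definition MI :: "(real^'n^'n) set \<Rightarrow> 'n \<Rightarrow> nat \<Rightarrow> real" where
  "MI S i N = Max ((\<lambda>p. pnorm S N (fst p) (snd p)) ` (cls S i \<times> cls S i))"

lemma frob:
  fixes T :: "nat set"
  assumes add: "\<forall>a\<in>T. \<forall>b\<in>T. a+b \<in> T" and pos: "0 \<notin> T" and ne: "t0 \<in> T"
  shows "\<exists>g>0. \<exists>F. (\<forall>s\<in>T. g dvd s) \<and> (\<forall>x\<ge>F. g dvd x \<longrightarrow> x \<in> T)"
proof -
  define T0 where "T0 = insert 0 T"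
  have add0: "a + b \<in> T0" if "a \<in> T0" "b \<in> T0" for a b
    using that add unfolding T0_def by auto
  have mult0: "q * a \<in> T0" if "a \<in> T0" for q a
  proof (induction q)
    case 0 then show ?case unfolding T0_def by simp
  next
    case (Suc q) then show ?case using add0[OF that Suc] by (simp add: add.commute)
  qed
  define Ds where "Ds = {z. \<exists>x\<in>T0. \<exists>y\<in>T0. y < x \<and> z = x - y}"
  have t0pos: "t0 > 0" using ne pos by (cases t0) auto
  have "t0 \<in> Ds" unfolding Ds_def T0_def using ne t0pos by (intro CollectI bexI[of _ t0] bexI[of _ 0]) auto
  define g where "g = (LEAST z. z \<in> Ds)"
  have gD: "g \<in> Ds" unfolding g_def by (rule LeastI) fact
  have gmin: "g \<le> z" if "z \<in> Ds" for z unfolding g_def using that by (rule Least_le)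
  obtain x y where xy: "x \<in> T0" "y \<in> T0" "y < x" "g = x - y" using gD unfolding Ds_def by auto
  have gpos: "g > 0" using xy by simp
  have dvd: "g dvd s" if "s \<in> T0" for s
  proof -
    define q r where "q = s div g" and "r = s mod g"
    have s: "s = q * g + r" unfolding q_def r_def by simp
    have rg: "r < g" unfolding r_def using gpos by simp
    have qx: "q * x = q * y + q * g" using xy by (simp add: algebra_simps)
    have e: "s + q * y = q * x + r" using s qx by simp
    have m1: "s + q * y \<in> T0" using add0[OF that mult0[OF xy(2)]] .
    have m2: "q * x \<in> T0" using mult0[OF xy(1)] .
    have "r = 0"
    proof (rule ccontr)
      assume "r \<noteq> 0"
      then have "r \<in> Ds" unfolding Ds_def using m1 m2 e by (intro CollectI bexI[of _ "s + q*y"] bexI[of _ "q*x"]) auto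
      then show False using gmin rg by fastforce
    qed
    then show ?thesis using s by simp
  qed
  obtain y' x' where yx: "y' \<in> T" "x' \<in> T0" "x' = y' + g"
  proof (cases "y = 0")
    case True
    then have "x = g" "x \<in> T" using xy gpos unfolding T0_def by auto
    show ?thesis
    proof (rule that[of x "x + x"])
      show "x \<in> T" by fact
      show "x + x \<in> T0" using add0[OF xy(1) xy(1)] .
      show "x + x = x + g" using \<open>x = g\<close> by simp
    qed
  next
    case False
    then have "y \<in> T" using xy unfolding T0_def by auto
    show ?thesis
    proof (rule that[of y x])
      show "y \<in> T" by fact
      show "x \<in> T0" using xy(1) .
      show "x = y + g" using xy(3,4) by simp
    qed
  qed
  have "g dvd y'" using dvd[of y'] yx(1) unfolding T0_def by blast
  then obtain k where k0: "y' = g * k" unfolding dvd_def by blast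
  then have k: "y' = k * g" by simp
  have k1: "k \<ge> 1"
  proof (rule ccontr)
    assume "\<not> k \<ge> 1"
    then have "y' = 0" using k by simp
    then show False using yx(1) pos by simp
  qed
  have "\<forall>z\<ge>k*k*g. g dvd z \<longrightarrow> z \<in> T"
  proof (intro allI impI)
    fix z assume z: "k*k*g \<le> z" "g dvd z"
    then obtain Q0 where "z = g * Q0" unfolding dvd_def by blast
    then have Q: "z = Q0 * g" by (simp add: mult.commute)
    define Q where "Q = Q0"
    have Q: "z = Q * g" using Q unfolding Q_def .
    have Qk: "k * k \<le> Q" using z(1) Q gpos by simp
    define m r where "m = Q div k" and "r = Q mod k"
    have Qmr: "Q = m * k + r" unfolding m_def r_def by simp
    have rk: "r < k" unfolding r_def using k1 by simp
    have mk: "k \<le> m" unfolding m_def using Qk k1 by (simp add: less_eq_div_iff_mult_less_eq)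
    have "z = (m - r) * y' + r * x'"
    proof -
      have "(m - r) * y' + r * x' = (m - r) * y' + r * y' + r * g" using yx(3) by (simp add: algebra_simps)
      also have "(m - r) * y' + r * y' = m * y'" using rk mk by (simp add: add_mult_distrib[symmetric])
      finally show ?thesis using Q Qmr k by (simp add: algebra_simps)
    qed
    moreover have "(m - r) * y' \<in> T0" by (rule mult0) (use yx(1) in \<open>simp add: T0_def\<close>)
    moreover have "r * x' \<in> T0" by (rule mult0[OF yx(2)])
    ultimately have "z \<in> T0" using add0 by simp
    moreover have "z \<noteq> 0"
    proof -
      have "k*k*g > 0" using k1 gpos by simp
      then show ?thesis using z(1) by linarith
    qed
    ultimately show "z \<in> T" unfolding T0_def by simp
  qed
  then show ?thesis using gpos dvd unfolding T0_def by blast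
qed

context nns
begin

lemma diag_pow: "pnorm S n i i ^ k \<le> pnorm S (n*k) i i"
proof (induction k)
  case 0 then show ?case by (simp add: pnorm_0)
next
  case (Suc k)
  have "pnorm S n i i ^ Suc k = pnorm S n i i * pnorm S n i i ^ k" by simp
  also have "\<dots> \<le> pnorm S n i i * pnorm S (n*k) i i"
    using Suc pnorm_nonneg by (intro mult_left_mono) auto
  also have "\<dots> \<le> pnorm S (n + n*k) i i" by (rule P1)
  finally show ?case by simp
qed

lemma lower: assumes "m > 0" shows "root m (pnorm S m i i) \<le> rho S"
proof -
  let ?c = "pnorm S m i i"
  let ?g = "\<lambda>k. m * Suc k"
  have sm: "strict_mono ?g" using assms by (intro strict_monoI) auto
  have lim: "((\<lambda>n. root n (ff S n)) \<circ> ?g) \<longlonglongrightarrow> rho S"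
    by (rule LIMSEQ_subseq_LIMSEQ[OF rho_lim sm])
  have "root m ?c \<le> ((\<lambda>n. root n (ff S n)) \<circ> ?g) k" for k
  proof -
    have "root (m * Suc k) (?c ^ Suc k) = root m (root (Suc k) (?c ^ Suc k))" by (rule real_root_mult_exp)
    also have "root (Suc k) (?c ^ Suc k) = ?c" using pnorm_nonneg by (intro real_root_power_cancel) auto
    finally have "root m ?c = root (m * Suc k) (?c ^ Suc k)" by simp
    also have "\<dots> \<le> root (m * Suc k) (ff S (m * Suc k))"
    proof (intro real_root_le_mono)
      show "0 < m * Suc k" using assms by simp
      have "?c ^ Suc k \<le> pnorm S (m * Suc k) i i" by (rule diag_pow)
      also have "\<dots> \<le> MM S (m * Suc k)" by (rule pnorm_le_MM)
      also have "\<dots> \<le> ff S (m * Suc k)" by (rule MM_le_ff)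
      finally show "?c ^ Suc k \<le> ff S (m * Suc k)" .
    qed
    finally show ?thesis by simp
  qed
  then show ?thesis by (intro LIMSEQ_le_const[OF lim]) auto
qed

lemma ff_pow: "n > 0 \<Longrightarrow> ff S n \<le> ff S 1 ^ n"
proof (induction n)
  case 0 then show ?case by simp
next
  case (Suc n)
  show ?case
  proof (cases "n = 0")
    case True then show ?thesis by simp
  next
    case False
    have "ff S (1 + n) \<le> ff S 1 * ff S n" using ff_sm by blast
    also have "\<dots> \<le> ff S 1 * ff S 1 ^ n" using Suc False ff_nn by (intro mult_left_mono) auto
    finally show ?thesis by simp
  qed
qed


lemma rhoi_bdd: "bdd_above {root n (pnorm S n i i) | n. n > 0}"
proof (intro bdd_aboveI[of _ "ff S 1"])
  fix x assume "x \<in> {root n (pnorm S n i i) | n. n > 0}"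
  then obtain n where n: "n > 0" "x = root n (pnorm S n i i)" by auto
  have "pnorm S n i i \<le> ff S 1 ^ n" using order_trans[OF pnorm_le_MM order_trans[OF MM_le_ff ff_pow[OF n(1)]]] .
  then have "x \<le> root n (ff S 1 ^ n)" using n by (simp add: real_root_le_mono)
  also have "\<dots> = ff S 1" using n ff_nn by (simp add: real_root_power_cancel)
  finally show "x \<le> ff S 1" .
qed

lemma rhoi_ge: "n > 0 \<Longrightarrow> root n (pnorm S n i i) \<le> rhoi S i"
  unfolding rhoi_def using rhoi_bdd by (intro cSup_upper) auto

lemma rhoi_nn: "rhoi S i \<ge> 0"
  using rhoi_ge[of 1 i] pnorm_nonneg[of 1 i i] by simp

lemma diag_le_rhoi: "pnorm S n i i \<le> rhoi S i ^ n"
proof (cases "n = 0")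
  case True then show ?thesis by (simp add: pnorm_0)
next
  case False
  then have "pnorm S n i i = (root n (pnorm S n i i))^n" using pnorm_nonneg by (simp add: real_root_pow_pos2)
  also have "\<dots> \<le> rhoi S i ^ n" using False pnorm_nonneg by (intro power_mono rhoi_ge) auto
  finally show ?thesis .
qed

lemma rhoi_pos_supp: "rhoi S i > 0 \<Longrightarrow> \<exists>n>0. pnorm S n i i > 0"
proof (rule ccontr)
  assume a: "rhoi S i > 0" "\<not> (\<exists>n>0. pnorm S n i i > 0)"
  have z: "pnorm S n i i = 0" if "n > 0" for n
  proof -
    have "\<not> pnorm S n i i > 0" using a(2) that by blast
    then show ?thesis using pnorm_nonneg[of n i i] by linarith
  qed
  have "{root n (pnorm S n i i) | n. n > 0} = {0}"
  proof (intro equalityI subsetI)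
    fix x assume "x \<in> {root n (pnorm S n i i) | n. n > 0}"
    then obtain n where "n > 0" "x = root n (pnorm S n i i)" by blast
    then show "x \<in> {0}" using z by simp
  next
    fix x assume "x \<in> {0::real}"
    then have "x = root 1 (pnorm S 1 i i)" using z[of 1] by simp
    then show "x \<in> {root n (pnorm S n i i) | n. n > 0}" by blast
  qed
  then have "rhoi S i = 0" unfolding rhoi_def by simp
  then show False using a by simp
qed

lemma blocks: "\<exists>l::nat \<Rightarrow> 'n::finite. l 0 = j \<and> l (Suc t) = k \<and>
   pnorm S (Suc t * N) j k \<le> real CARD('n) ^ Suc t * (\<Prod>r<Suc t. pnorm S N (l r) (l (Suc r)))"
proof (induction t arbitrary: j)
  case 0
  have "pnorm S N j k \<le> real CARD('n) * pnorm S N j k"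
    using mult_right_mono[OF card_pos pnorm_nonneg] by simp
  then show ?case
    by (intro exI[of _ "\<lambda>r. if r = 0 then j else k"]) simp
next
  case (Suc t)
  let ?g = "\<lambda>m. pnorm S N j m * pnorm S (Suc t * N) m k"
  have "Max (range ?g) \<in> range ?g" by (rule Max_in[OF finite_imageI[OF finite_class.finite_UNIV]]) simp
  then obtain m0 where m0: "Max (range ?g) = ?g m0" by (rule rangeE)
  have gm: "?g m \<le> ?g m0" for m
  proof -
    have "?g m \<le> Max (range ?g)" by (rule Max_ge[OF finite_imageI[OF finite_class.finite_UNIV] rangeI])
    then show ?thesis by (simp only: m0)
  qed
  obtain l' where l': "l' 0 = m0" "l' (Suc t) = k"
    "pnorm S (Suc t * N) m0 k \<le> real CARD('n) ^ Suc t * (\<Prod>r<Suc t. pnorm S N (l' r) (l' (Suc r)))"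
    using Suc by blast
  define l where "l r = (if r = 0 then j else l' (r - 1))" for r
  have "pnorm S (Suc (Suc t) * N) j k = pnorm S (N + Suc t * N) j k" by (simp add: algebra_simps)
  also have "\<dots> \<le> (\<Sum>m\<in>UNIV. ?g m)" by (rule P2)
  also have "\<dots> \<le> real CARD('n) * ?g m0"
    using sum_bounded_above[of UNIV ?g "?g m0"] gm by simp
  also have "\<dots> \<le> real CARD('n) * (pnorm S N j m0 * (real CARD('n) ^ Suc t * (\<Prod>r<Suc t. pnorm S N (l' r) (l' (Suc r)))))"
    using l'(3) pnorm_nonneg by (intro mult_left_mono) auto
  also have "\<dots> = real CARD('n) ^ Suc (Suc t) * (pnorm S N j m0 * (\<Prod>r<Suc t. pnorm S N (l' r) (l' (Suc r))))"
    by (simp add: mult_ac)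
  also have "pnorm S N j m0 * (\<Prod>r<Suc t. pnorm S N (l' r) (l' (Suc r))) = (\<Prod>r<Suc (Suc t). pnorm S N (l r) (l (Suc r)))"
    unfolding prod.lessThan_Suc_shift[of _ "Suc t"] by (simp add: l_def l'(1))
  finally have "pnorm S (Suc (Suc t) * N) j k \<le> real CARD('n) ^ Suc (Suc t) * (\<Prod>r<Suc (Suc t). pnorm S N (l r) (l (Suc r)))" .
  moreover have "l 0 = j" "l (Suc (Suc t)) = k" by (simp_all add: l_def l'(2))
  ultimately show ?case by blast
qed


lemma chain: "(\<Prod>r\<in>{s..<s+q}. pnorm S N (l r) (l (Suc r))) \<le> pnorm S (q*N) (l s) (l (s+q))"
proof (induction q)
  case 0 then show ?case by (simp add: pnorm_0)
next
  case (Suc q)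
  have "(\<Prod>r\<in>{s..<s+Suc q}. pnorm S N (l r) (l (Suc r))) =
      (\<Prod>r\<in>{s..<s+q}. pnorm S N (l r) (l (Suc r))) * pnorm S N (l (s+q)) (l (Suc (s+q)))"
    by (simp add: prod.atLeastLessThan_Suc)
  also have "\<dots> \<le> pnorm S (q*N) (l s) (l (s+q)) * pnorm S N (l (s+q)) (l (Suc (s+q)))"
    using Suc pnorm_nonneg by (intro mult_right_mono) auto
  also have "\<dots> \<le> pnorm S (q*N + N) (l s) (l (Suc (s+q)))" by (rule P1)
  finally show ?case by (simp add: algebra_simps)
qed

lemma rhoi_le_R: "rhoi S i \<le> Max (range (rhoi S))"
  by (rule Max_ge[OF finite_imageI[OF finite_class.finite_UNIV] rangeI])

lemma KI: assumes N: "N > 0"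
  shows "\<exists>q. 1 \<le> q \<and> q \<le> CARD('n) \<and> rho S ^ (Suc CARD('n) * N) \<le>
     real CARD('n) ^ (Suc (Suc CARD('n))) * MM S N ^ (Suc CARD('n) - q) * (Max (range (rhoi S))) ^ (q*N)"
proof -
  let ?d = "CARD('n)"
  let ?R = "Max (range (rhoi S))"
  have R0: "?R \<ge> 0" using rhoi_nn[of undefined] rhoi_le_R[of undefined] by linarith
  obtain j k where jk: "MM S (Suc ?d * N) = pnorm S (Suc ?d * N) j k" using MM_attained by blast
  obtain l :: "nat \<Rightarrow> 'n" where l: "l 0 = j" "l (Suc ?d) = k"
    "pnorm S (Suc ?d * N) j k \<le> real ?d ^ Suc ?d * (\<Prod>r<Suc ?d. pnorm S N (l r) (l (Suc r)))"
    using blocks[of j ?d k N] by blast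
  let ?w = "\<lambda>r. pnorm S N (l r) (l (Suc r))"
  have "\<not> inj_on l {..<Suc ?d}"
  proof
    assume "inj_on l {..<Suc ?d}"
    then have "card {..<Suc ?d} \<le> card (UNIV :: 'n set)" by (rule card_inj_on_le) auto
    then show False by simp
  qed
  then obtain x y where xy: "x < Suc ?d" "y < Suc ?d" "x \<noteq> y" "l x = l y"
    unfolding inj_on_def by auto
  define s u where "s = min x y" and "u = max x y"
  have su: "s < u" "u \<le> ?d" "l s = l u" using xy unfolding s_def u_def by (auto simp: min_def max_def)
  define q where "q = u - s"
  have q: "1 \<le> q" "q \<le> ?d" "u = s + q" using su unfolding q_def by auto
  define A where "A = {..<s} \<union> {u..<Suc ?d}"
  have Aeq: "{..<Suc ?d} = A \<union> {s..<u}" "A \<inter> {s..<u} = {}" unfolding A_def using su by auto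
  have cardA: "card A = Suc ?d - q" unfolding A_def using su q by (subst card_Un_disjoint) auto
  have w0: "0 \<le> ?w r" for r by (rule pnorm_nonneg)
  have pA: "(\<Prod>r\<in>A. ?w r) \<le> MM S N ^ (Suc ?d - q)"
  proof -
    have "(\<Prod>r\<in>A. ?w r) \<le> (\<Prod>r\<in>A. MM S N)" by (intro prod_mono) (simp add: w0 pnorm_le_MM)
    then show ?thesis using cardA by simp
  qed
  have pM: "(\<Prod>r\<in>{s..<u}. ?w r) \<le> ?R ^ (q*N)"
  proof -
    have "(\<Prod>r\<in>{s..<u}. ?w r) \<le> pnorm S (q*N) (l s) (l (s+q))" unfolding q(3) by (rule chain)
    also have "\<dots> = pnorm S (q*N) (l s) (l s)" using su q by simp
    also have "\<dots> \<le> rhoi S (l s) ^ (q*N)" by (rule diag_le_rhoi)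
    also have "\<dots> \<le> ?R ^ (q*N)" using rhoi_nn by (intro power_mono rhoi_le_R) auto
    finally show ?thesis .
  qed
  have "(\<Prod>r<Suc ?d. ?w r) = (\<Prod>r\<in>A. ?w r) * (\<Prod>r\<in>{s..<u}. ?w r)"
    unfolding Aeq(1) by (rule prod.union_disjoint) (use Aeq(2) A_def in auto)
  also have "\<dots> \<le> MM S N ^ (Suc ?d - q) * ?R ^ (q*N)"
    using pA pM w0 MM_nonneg by (intro mult_mono) (auto intro: prod_nonneg)
  finally have pall: "(\<Prod>r<Suc ?d. ?w r) \<le> MM S N ^ (Suc ?d - q) * ?R ^ (q*N)" .
  have "rho S ^ (Suc ?d * N) \<le> ff S (Suc ?d * N)" by (rule rho_pow_le)
  also have "\<dots> = real ?d * pnorm S (Suc ?d * N) j k" unfolding ff_def jk ..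
  also have "\<dots> \<le> real ?d * (real ?d ^ Suc ?d * (MM S N ^ (Suc ?d - q) * ?R ^ (q*N)))"
    using l(3) pall by (intro mult_left_mono order_trans[OF l(3)]) auto
  also have "\<dots> = real ?d ^ (Suc (Suc ?d)) * MM S N ^ (Suc ?d - q) * ?R ^ (q*N)" by simp
  finally show ?thesis using q by blast
qed


lemma U1: assumes rp: "rho S > 0" shows "\<exists>i. rhoi S i \<ge> rho S"
proof (rule ccontr)
  assume "\<not> (\<exists>i. rhoi S i \<ge> rho S)"
  then have lt: "rhoi S i < rho S" for i by (simp add: not_le)
  let ?d = "CARD('n)"
  let ?R = "Max (range (rhoi S))"
  have "?R \<in> range (rhoi S)" by (rule Max_in[OF finite_imageI[OF finite_class.finite_UNIV]]) simp
  then have Rlt: "?R < rho S" using lt by auto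
  have R0: "?R \<ge> 0" using rhoi_nn[of undefined] rhoi_le_R[of undefined] by linarith
  have d1: "?d \<ge> 1" by (simp add: Suc_leI)
  show False
  proof (cases "?R = 0")
    case True
    obtain q where q: "1 \<le> q" "rho S ^ (Suc ?d * 1) \<le>
        real ?d ^ (Suc (Suc ?d)) * MM S 1 ^ (Suc ?d - q) * ?R ^ (q*1)"
      using KI[of 1] by auto
    then have "rho S ^ (Suc ?d) \<le> 0" using True by (simp add: power_0_left)
    moreover have "rho S ^ (Suc ?d) > 0" using rp by simp
    ultimately show False by simp
  next
    case False
    then have Rp: "?R > 0" using R0 by simp
    define mid where "mid = (rho S ^ ?d + rho S ^ Suc ?d / ?R) / 2"
    have rr: "rho S ^ ?d < rho S ^ Suc ?d / ?R"
    proof -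
      have "rho S ^ ?d * ?R < rho S ^ ?d * rho S" using Rlt rp by (intro mult_strict_left_mono) auto
      then show ?thesis using Rp by (simp add: field_simps)
    qed
    have hh: "\<And>a b::real. a < b \<Longrightarrow> a < (a+b)/2 \<and> (a+b)/2 < b" by auto
    have mid1: "rho S ^ ?d < mid" "mid < rho S ^ Suc ?d / ?R" using hh[OF rr] unfolding mid_def by blast+
    define y where "y = root ?d mid"
    have mid0: "mid \<ge> 0" using mid1 rp by (smt (verit) zero_le_power)
    have yd: "y ^ ?d = mid" unfolding y_def using d1 mid0 by (simp add: real_root_pow_pos2)
    have y0: "y \<ge> 0" unfolding y_def using mid0 by simp
    have ygt: "y > rho S"
      using mid1(1) yd y0 by (metis power_less_imp_less_base)
    have Ryd: "?R * y ^ ?d < rho S ^ Suc ?d" using mid1(2) yd Rp by (simp add: field_simps)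
    obtain C where C: "C > 0" "\<forall>n. ff S n \<le> C * y^n" using rho_bound[OF ygt] by blast
    define C1 where "C1 = max 1 C"
    have C1: "C1 \<ge> 1" "\<And>n. MM S n \<le> C1 * y^n"
    proof -
      show "C1 \<ge> 1" unfolding C1_def by simp
      fix n
      have "MM S n \<le> C * y^n" using MM_le_ff C(2) order_trans by blast
      also have "\<dots> \<le> C1 * y^n" unfolding C1_def using y0 by (intro mult_right_mono) auto
      finally show "MM S n \<le> C1 * y^n" .
    qed
    define D where "D = real ?d ^ (Suc (Suc ?d)) * C1 ^ Suc ?d"
    define z where "z = rho S ^ Suc ?d / (?R * y ^ ?d)"
    have Rydp: "?R * y ^ ?d > 0" using Rp ygt rp by simp
    have z1: "z > 1" unfolding z_def using Ryd Rydp by simp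
    have bound: "z ^ N \<le> D" if N: "N > 0" for N
    proof -
      obtain q where q: "1 \<le> q" "q \<le> ?d" "rho S ^ (Suc ?d * N) \<le>
          real ?d ^ (Suc (Suc ?d)) * MM S N ^ (Suc ?d - q) * ?R ^ (q*N)"
        using KI[OF N] by blast
      have "MM S N ^ (Suc ?d - q) \<le> (C1 * y^N) ^ (Suc ?d - q)"
        using MM_nonneg C1(2) by (intro power_mono) auto
      also have "\<dots> = C1 ^ (Suc ?d - q) * y ^ (N * (Suc ?d - q))" by (simp add: power_mult_distrib power_mult)
      also have "\<dots> \<le> C1 ^ Suc ?d * y ^ (N * (Suc ?d - q))"
        using C1(1) y0 by (intro mult_right_mono power_increasing) auto
      finally have e1: "MM S N ^ (Suc ?d - q) \<le> C1 ^ Suc ?d * y ^ (N * (Suc ?d - q))" .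
      have "?R ^ (q*N) = ?R ^ N * ?R ^ ((q - 1) * N)" using q(1)
        by (metis One_nat_def Suc_diff_le diff_Suc_1 mult_Suc power_add)
      also have "\<dots> \<le> ?R ^ N * y ^ ((q - 1) * N)"
        using Rlt ygt by (intro mult_left_mono power_mono R0 zero_le_power) linarith+
      finally have e2: "?R ^ (q*N) \<le> ?R ^ N * y ^ ((q - 1) * N)" .
      have "rho S ^ (Suc ?d * N) \<le> real ?d ^ (Suc (Suc ?d)) * (C1 ^ Suc ?d * y ^ (N * (Suc ?d - q))) * (?R ^ N * y ^ ((q - 1) * N))"
      proof -
        have C10: "C1 \<ge> 0" using C1(1) by simp
        have "real ?d ^ (Suc (Suc ?d)) * MM S N ^ (Suc ?d - q) * ?R ^ (q*N) \<le>
            real ?d ^ (Suc (Suc ?d)) * (C1 ^ Suc ?d * y ^ (N * (Suc ?d - q))) * (?R ^ N * y ^ ((q - 1) * N))"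
          by (intro mult_mono mult_left_mono e1 e2 mult_nonneg_nonneg zero_le_power R0 y0 C10 of_nat_0_le_iff)
        then show ?thesis using q(3) by linarith
      qed
      also have "\<dots> = D * (?R ^ N * (y ^ (N * (Suc ?d - q)) * y ^ ((q - 1) * N)))"
        unfolding D_def by (simp add: mult_ac)
      also have "y ^ (N * (Suc ?d - q)) * y ^ ((q - 1) * N) = (y ^ ?d) ^ N"
      proof -
        have ee: "(Suc ?d - q) + (q - 1) = ?d" using q(1,2) by linarith
        have "N * (Suc ?d - q) + (q - 1) * N = ((Suc ?d - q) + (q - 1)) * N"
          by (simp only: add_mult_distrib add_mult_distrib2 mult.commute)
        then have "N * (Suc ?d - q) + (q - 1) * N = ?d * N" unfolding ee .
        then show ?thesis by (metis power_add power_mult)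
      qed
      finally have X: "rho S ^ (Suc ?d * N) \<le> D * (?R ^ N * (y ^ ?d) ^ N)" .
      have "(rho S ^ Suc ?d) ^ N \<le> D * (?R * y ^ ?d) ^ N"
        using X by (simp only: power_mult[symmetric] power_mult_distrib)
      then have "(rho S ^ Suc ?d) ^ N / (?R * y ^ ?d) ^ N \<le> D"
        using Rydp by (simp add: divide_le_eq)
      then show ?thesis unfolding z_def by (simp add: power_divide)
    qed
    obtain N0 where N0: "D < z ^ N0" using real_arch_pow[OF z1] by blast
    have "z ^ N0 \<le> z ^ Suc N0" using z1 by (intro power_increasing) auto
    then have "D < z ^ Suc N0" using N0 by simp
    then show False using bound[of "Suc N0"] by simp
  qed
qed


lemma reach_trans: "reach S j l \<Longrightarrow> reach S l k \<Longrightarrow> reach S j k"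
proof -
  assume "reach S j l" "reach S l k"
  then obtain a b where ab: "pnorm S a j l > 0" "pnorm S b l k > 0" unfolding reach_def by blast
  then have "0 < pnorm S a j l * pnorm S b l k" by simp
  also have "\<dots> \<le> pnorm S (a+b) j k" by (rule P1)
  finally show "reach S j k" unfolding reach_def by blast
qed

lemma reach_refl: "reach S j j" unfolding reach_def by (intro exI[of _ 0]) (simp add: pnorm_0)

lemma cls_self: "i \<in> cls S i" unfolding cls_def using reach_refl by simp

lemma cls_card: "real (card (cls S i)) \<le> real CARD('n)"
  using card_mono[of UNIV "cls S i"] by simp

lemma rP2: assumes "j \<in> cls S i" "k \<in> cls S i"
  shows "pnorm S (a+b) j k \<le> (\<Sum>l\<in>cls S i. pnorm S a j l * pnorm S b l k)"
proof -
  have "pnorm S (a+b) j k \<le> (\<Sum>l\<in>UNIV. pnorm S a j l * pnorm S b l k)" by (rule P2)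
  also have "\<dots> = (\<Sum>l\<in>cls S i. pnorm S a j l * pnorm S b l k)"
  proof (rule sum.mono_neutral_right)
    show "\<forall>l\<in>UNIV - cls S i. pnorm S a j l * pnorm S b l k = 0"
    proof (intro ballI)
      fix l assume l: "l \<in> UNIV - cls S i"
      show "pnorm S a j l * pnorm S b l k = 0"
      proof (rule ccontr)
        assume ne: "pnorm S a j l * pnorm S b l k \<noteq> 0"
        have "pnorm S a j l \<noteq> 0" "pnorm S b l k \<noteq> 0" using ne by auto
        then have "pnorm S a j l > 0" "pnorm S b l k > 0"
          using pnorm_nonneg[of a j l] pnorm_nonneg[of b l k] by linarith+
        then have "reach S j l" "reach S l k" unfolding reach_def by blast+
        then have jl: "reach S j l" and lk: "reach S l k" by blast+
        have ij: "reach S i j" and ki: "reach S k i" using assms unfolding cls_def by blast+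
        have "reach S i l" by (rule reach_trans[OF ij jl])
        moreover have "reach S l i" by (rule reach_trans[OF lk ki])
        ultimately have "l \<in> cls S i" unfolding cls_def by blast
        then show False using l by simp
      qed
    qed
  qed auto
  finally show ?thesis .
qed

lemma pnorm_le_MI: "j \<in> cls S i \<Longrightarrow> k \<in> cls S i \<Longrightarrow> pnorm S N j k \<le> MI S i N"
  unfolding MI_def by (rule Max_ge) (auto intro: image_eqI[of _ _ "(j,k)"])

lemma MI_attained: "\<exists>j\<in>cls S i. \<exists>k\<in>cls S i. MI S i N = pnorm S N j k"
proof -
  have "MI S i N \<in> (\<lambda>p. pnorm S N (fst p) (snd p)) ` (cls S i \<times> cls S i)"
    unfolding MI_def using cls_self by (intro Max_in) auto
  then obtain p where p: "p \<in> cls S i \<times> cls S i" "MI S i N = pnorm S N (fst p) (snd p)" by (rule imageE)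
  have "fst p \<in> cls S i" "snd p \<in> cls S i" using p(1) by (simp_all add: mem_Times_iff)
  then show ?thesis using p(2) by blast
qed

lemma MI_nonneg: "MI S i N \<ge> 0"
  using pnorm_le_MI[OF cls_self cls_self] pnorm_nonneg order_trans by blast

lemma MI_pow: assumes "j \<in> cls S i" "k \<in> cls S i"
  shows "pnorm S (Suc t * N) j k \<le> real CARD('n) ^ t * MI S i N ^ Suc t"
  using assms(1)
proof (induction t arbitrary: j)
  case 0 then show ?case using pnorm_le_MI[OF _ assms(2)] by simp
next
  case (Suc t)
  have "pnorm S (Suc (Suc t) * N) j k = pnorm S (N + Suc t * N) j k" by (simp add: algebra_simps)
  also have "\<dots> \<le> (\<Sum>l\<in>cls S i. pnorm S N j l * pnorm S (Suc t * N) l k)" by (rule rP2[OF Suc.prems assms(2)])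
  also have "\<dots> \<le> (\<Sum>l\<in>cls S i. MI S i N * (real CARD('n) ^ t * MI S i N ^ Suc t))"
    using Suc.IH pnorm_le_MI[OF Suc.prems] pnorm_nonneg MI_nonneg
    by (intro sum_mono mult_mono) auto
  also have "\<dots> = real (card (cls S i)) * (MI S i N * (real CARD('n) ^ t * MI S i N ^ Suc t))" by simp
  also have "\<dots> \<le> real CARD('n) * (MI S i N * (real CARD('n) ^ t * MI S i N ^ Suc t))"
    using MI_nonneg cls_card by (intro mult_right_mono) auto
  also have "\<dots> = real CARD('n) ^ Suc t * MI S i N ^ Suc (Suc t)" by (simp add: mult_ac)
  finally show ?case .
qed

lemma rhoi_le_MI: assumes N: "N > 0" shows "rhoi S i ^ N \<le> real CARD('n) * MI S i N"
proof -
  let ?X = "real CARD('n) * MI S i N"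
  have X0: "?X \<ge> 0" using MI_nonneg by simp
  have "root n (pnorm S n i i) \<le> root N ?X" if n: "n > 0" for n
  proof -
    let ?p = "pnorm S n i i"
    have "?p ^ N \<le> pnorm S (n*N) i i" by (rule diag_pow)
    also have "n * N = Suc (n - 1) * N" using n by simp
    also have "pnorm S (Suc (n - 1) * N) i i \<le> real CARD('n) ^ (n - 1) * MI S i N ^ Suc (n - 1)"
      by (rule MI_pow[OF cls_self cls_self])
    also have "\<dots> \<le> real CARD('n) ^ n * MI S i N ^ n"
    proof -
      have sn: "Suc (n-1) = n" using n by simp
      have "real CARD('n)^(n-1) \<le> real CARD('n)^n" by (rule power_increasing) auto
      then show ?thesis unfolding sn using MI_nonneg[of i N] by (intro mult_right_mono) auto
    qed
    also have "\<dots> = ?X ^ n" by (simp add: power_mult_distrib)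
    finally have pX: "?p ^ N \<le> ?X ^ n" .
    have rp0: "(root n ?p) ^ n = ?p" using n pnorm_nonneg by (intro real_root_pow_pos2) auto
    have rX0: "(root N ?X) ^ N = ?X" using N X0 by (intro real_root_pow_pos2) auto
    have e1: "(root n ?p) ^ (n*N) = ?p ^ N" by (simp only: power_mult rp0)
    have e2: "(root N ?X) ^ (n*N) = ?X ^ n" by (simp only: mult.commute[of n N] power_mult rX0)
    define e where "e = n * N - 1"
    have e: "n * N = Suc e" using n N unfolding e_def by simp
    have "(root n ?p) ^ Suc e \<le> (root N ?X) ^ Suc e" unfolding e[symmetric] e1 e2 by (rule pX)
    then show ?thesis by (rule power_le_imp_le_base) (rule real_root_ge_zero[OF X0])
  qed
  then have "rhoi S i \<le> root N ?X" unfolding rhoi_def by (intro cSup_least) blast+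
  then have "rhoi S i ^ N \<le> (root N ?X) ^ N" using rhoi_nn by (intro power_mono) auto
  also have "\<dots> = ?X" using N X0 by (simp add: real_root_pow_pos2)
  finally show ?thesis .
qed


lemma U2: assumes rp: "rho S > 0" and ri: "rhoi S i \<ge> rho S"
  shows "\<exists>K>0. \<forall>n>0. pnorm S n i i \<noteq> 0 \<longrightarrow> rho S ^ n \<le> K * pnorm S n i i"
proof -
  let ?d = "real CARD('n)"
  let ?C = "cls S i"
  let ?r = "rho S"
  have d1: "?d \<ge> 1" by (rule card_pos)
  have heavy: "\<exists>j\<in>?C. \<exists>k\<in>?C. ?r^N \<le> ?d * pnorm S N j k" if N: "N > 0" for N
  proof -
    obtain j k where jk: "j \<in> ?C" "k \<in> ?C" "MI S i N = pnorm S N j k" using MI_attained by blast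
    have "?r^N \<le> rhoi S i ^ N" using ri rho_nn by (intro power_mono) auto
    also have "\<dots> \<le> ?d * MI S i N" by (rule rhoi_le_MI[OF N])
    finally have "?r^N \<le> ?d * pnorm S N j k" using jk(3) by simp
    then show ?thesis using jk(1,2) by blast
  qed
  have "\<forall>j\<in>?C. \<exists>a. pnorm S a i j > 0" unfolding cls_def reach_def by blast
  then have "\<exists>a. \<forall>j\<in>?C. pnorm S (a j) i j > 0" by (rule bchoice)
  then obtain a where a: "\<forall>j\<in>?C. pnorm S (a j) i j > 0" by (elim exE)
  have "\<forall>j\<in>?C. \<exists>b. pnorm S b j i > 0" unfolding cls_def reach_def by blast
  then have "\<exists>b. \<forall>j\<in>?C. pnorm S (b j) j i > 0" by (rule bchoice)
  then obtain b where b: "\<forall>j\<in>?C. pnorm S (b j) j i > 0" by (elim exE)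
  define T where "T = {n. n > 0 \<and> pnorm S n i i > 0}"
  have Tadd: "\<forall>x\<in>T. \<forall>y\<in>T. x + y \<in> T"
  proof (intro ballI)
    fix x y assume xy: "x \<in> T" "y \<in> T"
    then have "0 < pnorm S x i i * pnorm S y i i" unfolding T_def by simp
    also have "\<dots> \<le> pnorm S (x+y) i i" by (rule P1)
    finally show "x + y \<in> T" using xy unfolding T_def by simp
  qed
  have T0: "0 \<notin> T" unfolding T_def by simp
  have "rhoi S i > 0" using rp ri by linarith
  then obtain t0 where "t0 > 0" "pnorm S t0 i i > 0" using rhoi_pos_supp by blast
  then have t0: "t0 \<in> T" unfolding T_def by simp
  obtain g F where gF: "g > 0" "\<forall>s\<in>T. g dvd s" "\<forall>x\<ge>F. g dvd x \<longrightarrow> x \<in> T"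
    using frob[OF Tadd T0 t0] by blast
  have finC: "finite ?C" by simp
  define B where "B = Max (a ` ?C) + Max (b ` ?C)"
  have aB: "a j + b k \<le> B" if "j \<in> ?C" "k \<in> ?C" for j k
  proof -
    have "a j \<le> Max (a ` ?C)" using that by (intro Max_ge) auto
    moreover have "b k \<le> Max (b ` ?C)" using that by (intro Max_ge) auto
    ultimately show ?thesis unfolding B_def by simp
  qed
  define X0 where "X0 = F + B"
  define cs where "cs = (\<lambda>q. pnorm S (a (fst q)) i (fst q) * pnorm S (b (snd q)) (snd q) i) ` (?C \<times> ?C)"
  define c where "c = Min (insert 1 cs)"
  have fcs: "finite cs" unfolding cs_def by simp
  have cpos: "c > 0" unfolding c_def
  proof (subst Min_gr_iff)
    show "finite (insert 1 cs)" using fcs by simp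
    show "insert 1 cs \<noteq> {}" by simp
    show "\<forall>x\<in>insert 1 cs. 0 < x"
    proof
      fix x assume "x \<in> insert 1 cs"
      then show "0 < x"
      proof
        assume "x \<in> cs"
        then obtain q where q: "q \<in> ?C \<times> ?C" "x = pnorm S (a (fst q)) i (fst q) * pnorm S (b (snd q)) (snd q) i"
          unfolding cs_def by (rule imageE)
        have "fst q \<in> ?C" "snd q \<in> ?C" using q(1) by (simp_all add: mem_Times_iff)
        then show "0 < x" using q(2) a b by simp
      qed simp
    qed
  qed
  have c1: "c \<le> 1" unfolding c_def using fcs by (intro Min_le) auto
  have cle: "c \<le> pnorm S (a j) i j * pnorm S (b k) k i" if "j \<in> ?C" "k \<in> ?C" for j k
  proof -
    have "pnorm S (a j) i j * pnorm S (b k) k i \<in> cs"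
      unfolding cs_def using that by (intro image_eqI[of _ _ "(j,k)"]) auto
    then show ?thesis unfolding c_def using fcs by (intro Min_le) auto
  qed
  define c2 where "c2 = Min (insert 1 ((\<lambda>x. pnorm S x i i) ` {x\<in>T. x \<le> X0}))"
  have fT: "finite {x\<in>T. x \<le> X0}" by (rule finite_subset[of _ "{..X0}"]) auto
  have c2pos: "c2 > 0" unfolding c2_def
  proof (subst Min_gr_iff)
    show "finite (insert 1 ((\<lambda>x. pnorm S x i i) ` {x\<in>T. x \<le> X0}))" using fT by simp
    show "\<forall>y\<in>insert 1 ((\<lambda>x. pnorm S x i i) ` {x\<in>T. x \<le> X0}). 0 < y" unfolding T_def by auto
  qed simp
  have c2le: "c2 \<le> pnorm S x i i" if "x \<in> T" "x \<le> X0" for x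
    unfolding c2_def using fT that by (intro Min_le) auto
  define mx where "mx = max 1 ?r ^ X0"
  have mx1: "mx \<ge> 1" unfolding mx_def by simp
  define K where "K = ?d * mx / (c * c2)"
  have Kpos: "K > 0" unfolding K_def using d1 mx1 cpos c2pos by simp
  have main: "?r ^ n \<le> K * pnorm S n i i" if n: "n > 0" "pnorm S n i i \<noteq> 0" for n
  proof -
    have nT: "n \<in> T" unfolding T_def using n pnorm_nonneg[of n i i] by simp
    show ?thesis
    proof (cases "n \<le> X0")
      case True
      have "?r ^ n \<le> max 1 ?r ^ n" using rho_nn by (intro power_mono) auto
      also have "\<dots> \<le> mx" unfolding mx_def using True by (intro power_increasing) auto
      also have "mx \<le> ?d * mx / c"
      proof -
        have "c * mx \<le> 1 * mx" using c1 mx1 by (intro mult_right_mono) auto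
        also have "\<dots> \<le> ?d * mx" using d1 mx1 by (intro mult_right_mono) auto
        finally show ?thesis using cpos by (simp add: field_simps)
      qed
      also have "?d * mx / c = K * c2" unfolding K_def using c2pos by (simp add: field_simps)
      also have "\<dots> \<le> K * pnorm S n i i" using Kpos c2le[OF nT True] by (intro mult_left_mono) auto
      finally show ?thesis .
    next
      case False
      define N where "N = n - X0"
      have N: "N > 0" "n = N + X0" using False unfolding N_def by auto
      obtain j k where jk: "j \<in> ?C" "k \<in> ?C" "?r^N \<le> ?d * pnorm S N j k" using heavy[OF N(1)] by blast
      let ?q1 = "pnorm S (a j) i j" and ?q2 = "pnorm S N j k" and ?q3 = "pnorm S (b k) k i"
      have q1: "?q1 > 0" using a jk by simp
      have q3: "?q3 > 0" using b jk by simp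
      have q2: "?q2 > 0"
      proof -
        have "0 < ?r^N" using rp by simp
        also have "\<dots> \<le> ?d * ?q2" by (rule jk(3))
        finally show ?thesis using d1 by (simp add: zero_less_mult_iff)
      qed
      define s where "s = a j + N + b k"
      have ps: "?q1 * ?q2 * ?q3 \<le> pnorm S s i i"
      proof -
        have "?q1 * ?q2 \<le> pnorm S (a j + N) i k" by (rule P1)
        then have "?q1 * ?q2 * ?q3 \<le> pnorm S (a j + N) i k * ?q3" using q3 by (intro mult_right_mono) auto
        also have "\<dots> \<le> pnorm S (a j + N + b k) i i" by (rule P1)
        finally show ?thesis unfolding s_def .
      qed
      have sT: "s \<in> T" unfolding T_def s_def using N(1) ps q1 q2 q3 unfolding s_def
        by (simp add: order_less_le_trans[OF mult_pos_pos[OF mult_pos_pos[OF q1 q2] q3]])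
      define r where "r = n - s"
      have abB: "a j + b k \<le> B" by (rule aB[OF jk(1,2)])
      have nsr: "n = s + r" "F \<le> r" "r \<le> X0" using N(2) abB unfolding r_def s_def X0_def by auto
      have "g dvd s" using gF(2) sT by blast
      moreover have "g dvd n" using gF(2) nT by blast
      ultimately have "g dvd r" using nsr(1) by (simp add: dvd_add_right_iff)
      then have rT: "r \<in> T" using gF(3) nsr(2) by blast
      have pr: "c2 \<le> pnorm S r i i" by (rule c2le[OF rT nsr(3)])
      have "pnorm S s i i * pnorm S r i i \<le> pnorm S (s + r) i i" by (rule P1)
      then have pn: "pnorm S s i i * pnorm S r i i \<le> pnorm S n i i" using nsr(1) by simp
      have "c * ?q2 * c2 \<le> (?q1 * ?q3) * ?q2 * c2"
        using cle[OF jk(1,2)] q2 c2pos by (intro mult_right_mono) auto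
      also have "\<dots> = (?q1 * ?q2 * ?q3) * c2" by (simp add: mult_ac)
      also have "\<dots> \<le> pnorm S s i i * pnorm S r i i"
        using ps pr q1 q2 q3 c2pos pnorm_nonneg by (intro mult_mono) auto
      also have "\<dots> \<le> pnorm S n i i" by (rule pn)
      finally have pnl: "c * ?q2 * c2 \<le> pnorm S n i i" .
      have "?r ^ n = ?r ^ N * ?r ^ X0" using N(2) by (simp add: power_add)
      also have "\<dots> \<le> (?d * ?q2) * mx"
      proof (intro mult_mono jk(3))
        show "?r ^ X0 \<le> mx" unfolding mx_def using rho_nn by (intro power_mono) auto
      qed (use rho_nn d1 q2 in auto)
      also have "(?d * ?q2) * mx = K * (c * ?q2 * c2)" unfolding K_def using cpos c2pos by (simp add: field_simps)
      also have "\<dots> \<le> K * pnorm S n i i" using Kpos pnl by (intro mult_left_mono) auto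
      finally show ?thesis .
    qed
  qed
  show ?thesis using Kpos main by blast
qed

end

theorem theorem2:
  fixes \<Sigma> :: "(real^'n^'n) set"
  assumes "finite \<Sigma>" and "\<Sigma> \<noteq> {}"
    and "\<forall>A\<in>\<Sigma>. \<forall>i j. A $ i $ j \<ge> 0"
  shows "\<exists>K>0. \<forall>m :: 'n \<Rightarrow> nat.
           (\<forall>i. (m i > 0 \<and> pnorm \<Sigma> (m i) i i \<noteq> 0)
              \<or> (m i = 1 \<and> (\<forall>k>0. pnorm \<Sigma> k i i = 0))) \<longrightarrow>
           (Max (range (\<lambda>i. root (m i) (pnorm \<Sigma> (m i) i i)))) \<le> jsr \<Sigma> \<and>
           jsr \<Sigma> \<le> Max (range (\<lambda>i. root (m i) (K * pnorm \<Sigma> (m i) i i)))"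
proof -
  interpret nns \<Sigma> by unfold_locales (use assms in auto)
  have J: "jsr \<Sigma> = rho \<Sigma>" by (rule jsr_eq)
  have low: "Max (range (\<lambda>i. root (m i) (pnorm \<Sigma> (m i) i i))) \<le> rho \<Sigma>"
    if mpos: "\<forall>i. m i > 0" for m :: "'n \<Rightarrow> nat"
  proof (rule Max.boundedI)
    show "finite (range (\<lambda>i. root (m i) (pnorm \<Sigma> (m i) i i)))" by simp
    show "range (\<lambda>i. root (m i) (pnorm \<Sigma> (m i) i i)) \<noteq> {}" by simp
    fix x assume "x \<in> range (\<lambda>i. root (m i) (pnorm \<Sigma> (m i) i i))"
    then obtain i where "x = root (m i) (pnorm \<Sigma> (m i) i i)" by (rule rangeE)
    then show "x \<le> rho \<Sigma>" using lower[of "m i" i] mpos by simp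
  qed
  have mpos: "\<forall>i. m i > 0" if "\<forall>i. (m i > 0 \<and> pnorm \<Sigma> (m i) i i \<noteq> 0)
              \<or> (m i = 1 \<and> (\<forall>k>0. pnorm \<Sigma> k i i = 0))" for m :: "'n \<Rightarrow> nat"
  proof
    fix i show "m i > 0" using that[rule_format, of i] by auto
  qed
  show ?thesis
  proof (cases "rho \<Sigma> > 0")
    case False
    then have r0: "rho \<Sigma> = 0" using rho_nn by simp
    have up: "jsr \<Sigma> \<le> Max (range (\<lambda>i. root (m i) (1 * pnorm \<Sigma> (m i) i i)))" for m :: "'n \<Rightarrow> nat"
    proof -
      have "root (m undefined) (1 * pnorm \<Sigma> (m undefined) undefined undefined) \<le>
          Max (range (\<lambda>i. root (m i) (1 * pnorm \<Sigma> (m i) i i)))"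
        by (rule Max_ge) auto
      moreover have "0 \<le> root (m undefined) (1 * pnorm \<Sigma> (m undefined) undefined undefined)"
        by (rule real_root_ge_zero) (simp add: pnorm_nonneg)
      ultimately show ?thesis using J r0 by linarith
    qed
    show ?thesis
      by (rule exI[of _ 1]) (use low mpos up J in auto)
  next
    case True
    obtain i0 where i0: "rhoi \<Sigma> i0 \<ge> rho \<Sigma>" using U1[OF True] by blast
    obtain K where K: "K > 0" "\<forall>n>0. pnorm \<Sigma> n i0 i0 \<noteq> 0 \<longrightarrow> rho \<Sigma> ^ n \<le> K * pnorm \<Sigma> n i0 i0"
      using U2[OF True i0] by blast
    have "rhoi \<Sigma> i0 > 0" using True i0 by linarith
    then obtain n0 where n0: "n0 > 0" "pnorm \<Sigma> n0 i0 i0 > 0" using rhoi_pos_supp by blast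
    have up: "rho \<Sigma> \<le> Max (range (\<lambda>i. root (m i) (K * pnorm \<Sigma> (m i) i i)))"
      if valid: "\<forall>i. (m i > 0 \<and> pnorm \<Sigma> (m i) i i \<noteq> 0)
              \<or> (m i = 1 \<and> (\<forall>k>0. pnorm \<Sigma> k i i = 0))" for m :: "'n \<Rightarrow> nat"
    proof -
      have mi: "m i0 > 0 \<and> pnorm \<Sigma> (m i0) i0 i0 \<noteq> 0" using valid[rule_format, of i0] n0 by auto
      then have le: "rho \<Sigma> ^ m i0 \<le> K * pnorm \<Sigma> (m i0) i0 i0" using K(2) by blast
      have "rho \<Sigma> = root (m i0) (rho \<Sigma> ^ m i0)" using mi rho_nn by (simp add: real_root_power_cancel)
      also have "\<dots> \<le> root (m i0) (K * pnorm \<Sigma> (m i0) i0 i0)" using mi le by (intro real_root_le_mono) auto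
      also have "\<dots> \<le> Max (range (\<lambda>i. root (m i) (K * pnorm \<Sigma> (m i) i i)))" by (rule Max_ge) auto
      finally show ?thesis .
    qed
    show ?thesis
      by (rule exI[of _ K]) (use K(1) low mpos up J in auto)
  qed
qed

end
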